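(* Fix either an RSK growth diagram or a $d$-RSK growth diagram on a Young diagram $F$, and let $\alpha,\beta$ be partitions assigned to lattice points of the diagram. (i) If $\alpha$ is located weakly below and weakly to the left of $\beta$, then $\alpha\subseteq\beta$. (ii) If $\alpha,\beta$ are at the endpoints of a horizontal edge with $\alpha$ to the left of $\beta$, then $|\beta|-|\alpha|$ equals the sum of the entries in the column of cells below that edge; if they are at the endpoints of a vertical edge with $\alpha$ below $\beta$, then $|\beta|-|\alpha|$ equals the sum of the entries in the row of cells to the left of that edge. (iii) Reflecting all the data of the growth diagram (cells, entries, partitions) across the line $y=x$ gives a growth diagram of the same type (RSK or $d$-RSK) on the reflected Young diagram $F'$.
   Context: Partitions are finite weakly decreasing sequences of positive integers with $\lambda_i=0$ for $i>\ell(\lambda)$, $|\lambda|=\sum\lambda_i$; $d$-partitions have $\ell(\lambda)\le d$; $\alpha\subseteq\beta$ means $\alpha_i\le\beta_i$ for all $i$; $\alpha\prec\beta$ (also $\beta\succ\alpha$) means $\beta_1\ge\alpha_1\ge\beta_2\ge\alpha_2\ge\cdots$. Young diagrams lie in the first quadrant with unit cells at integer lattice points, left-justified, rows stacked upward from the $x$-axis; lattice points are cell corners, edges are cell sides; a filling assigns nonnegative integers to cells. A growth diagram on $F$ is a filling plus a partition at each lattice point, with $\emptyset$ at all lattice points on the coordinate axes, such that each cell satisfies a local rule. For a cell with entry $m$ and bottom-left, top-left, bottom-right, top-right corners $\kappa,\mu,\nu,\rho$: RSK local rule: $\mu\succ\kappa\prec\nu$, $\mu\prec\rho\succ\nu$,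 $\rho_1=m+\max(\mu_1,\nu_1)$, and $\rho_i+\kappa_{i-1}=\min(\mu_{i-1},\nu_{i-1})+\max(\mu_i,\nu_i)$ for all $i\ge2$. $d$-RSK local rule: all four are $d$-partitions, $\mu\succ\kappa\prec\nu$, $\mu\prec\rho\succ\nu$, $m=0$ or $\kappa_d=0$, $\rho_1+\kappa_d=m+\min(\mu_d,\nu_d)+\max(\mu_1,\nu_1)$, and $\rho_i+\kappa_{i-1}=\min(\mu_{i-1},\nu_{i-1})+\max(\mu_i,\nu_i)$ for $2\le i\le d$. An RSK (resp. $d$-RSK) growth diagram is one in which every cell satisfies the RSK (resp. $d$-RSK) local rule. *)

theory Defs
  imports Main
begin

text \<open>A partition is represented as a function la :: nat => nat, where la i is the
i-th part for i >= 1 (parts indexed from 1 as in the paper); the unused index 0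
is normalised to 0. Parts are weakly decreasing and only finitely many are nonzero.\<close>

type_synonym partition = "nat \<Rightarrow> nat"

definition is_partition :: "partition \<Rightarrow> bool" where
  "is_partition la \<longleftrightarrow> la 0 = 0 \<and> (\<forall>i\<ge>1. la (Suc i) \<le> la i) \<and> finite {i. la i \<noteq> 0}"

definition empty_partition :: partition where
  "empty_partition = (\<lambda>_. 0)"

definition is_dpartition :: "nat \<Rightarrow> partition \<Rightarrow> bool" where
  "is_dpartition d la \<longleftrightarrow> is_partition la \<and> (\<forall>i>d. la i = 0)"

definition psize :: "partition \<Rightarrow> nat" where
  "psize la = (\<Sum>i\<in>{i. la i \<noteq> 0}. la i)"

definition psubseteq :: "partition \<Rightarrow> partition \<Rightarrow> bool" where
  "psubseteq a b \<longleftrightarrow> (\<forall>i. a i \<le> b i)"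

definition interlace :: "partition \<Rightarrow> partition \<Rightarrow> bool" where
  "interlace a b \<longleftrightarrow> (\<forall>i\<ge>1. a i \<le> b i \<and> b (Suc i) \<le> a i)"

text \<open>Cells are identified with their bottom-left lattice point (x,y) in nat x nat.
A Young diagram (French convention, first quadrant) is a finite down-closed set of cells.\<close>

definition young_diagram :: "(nat \<times> nat) set \<Rightarrow> bool" where
  "young_diagram F \<longleftrightarrow> finite F \<and>
     (\<forall>x y x' y'. (x, y) \<in> F \<and> x' \<le> x \<and> y' \<le> y \<longrightarrow> (x', y') \<in> F)"

definition lattice_points :: "(nat \<times> nat) set \<Rightarrow> (nat \<times> nat) set" where
  "lattice_points F = {(x, y). \<exists>(a, b)\<in>F. x \<in> {a, Suc a} \<and> y \<in> {b, Suc b}}"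

text \<open>Horizontal edges ((x,y),(x+1,y)) and vertical edges ((x,y),(x,y+1)) of F:
  sides of cells of F, given by their left / lower endpoint.\<close>
definition horiz_edge :: "(nat \<times> nat) set \<Rightarrow> nat \<Rightarrow> nat \<Rightarrow> bool" where
  "horiz_edge F x y \<longleftrightarrow> (x, y) \<in> F \<or> (y > 0 \<and> (x, y - 1) \<in> F)"

definition vert_edge :: "(nat \<times> nat) set \<Rightarrow> nat \<Rightarrow> nat \<Rightarrow> bool" where
  "vert_edge F x y \<longleftrightarrow> (x, y) \<in> F \<or> (x > 0 \<and> (x - 1, y) \<in> F)"

text \<open>Arguments: entry m, then corners kappa (bottom-left), mu (top-left),
  nu (bottom-right), rho (top-right).\<close>

definition rsk_local :: "nat \<Rightarrow> partition \<Rightarrow> partition \<Rightarrow> partition \<Rightarrow> partition \<Rightarrow> bool" where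
  "rsk_local m ka mu nu rho \<longleftrightarrow>
     interlace ka mu \<and> interlace ka nu \<and> interlace mu rho \<and> interlace nu rho \<and>
     rho 1 = m + max (mu 1) (nu 1) \<and>
     (\<forall>i\<ge>2. rho i + ka (i - 1) = min (mu (i - 1)) (nu (i - 1)) + max (mu i) (nu i))"

definition drsk_local :: "nat \<Rightarrow> nat \<Rightarrow> partition \<Rightarrow> partition \<Rightarrow> partition \<Rightarrow> partition \<Rightarrow> bool" where
  "drsk_local d m ka mu nu rho \<longleftrightarrow>
     is_dpartition d ka \<and> is_dpartition d mu \<and> is_dpartition d nu \<and> is_dpartition d rho \<and>
     interlace ka mu \<and> interlace ka nu \<and> interlace mu rho \<and> interlace nu rho \<and>
     (m = 0 \<or> ka d = 0) \<and>
     rho 1 + ka d = m + min (mu d) (nu d) + max (mu 1) (nu 1) \<and>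
     (\<forall>i. 2 \<le> i \<and> i \<le> d \<longrightarrow>
        rho i + ka (i - 1) = min (mu (i - 1)) (nu (i - 1)) + max (mu i) (nu i))"

datatype growth_type = RSK | dRSK nat

definition local_rule :: "growth_type \<Rightarrow> nat \<Rightarrow> partition \<Rightarrow> partition \<Rightarrow> partition \<Rightarrow> partition \<Rightarrow> bool" where
  "local_rule T m ka mu nu rho = (case T of RSK \<Rightarrow> rsk_local m ka mu nu rho
                                      | dRSK d \<Rightarrow> drsk_local d m ka mu nu rho)"

definition growth_diagram ::
  "growth_type \<Rightarrow> (nat \<times> nat) set \<Rightarrow> (nat \<times> nat \<Rightarrow> nat) \<Rightarrow> (nat \<times> nat \<Rightarrow> partition) \<Rightarrow> bool" where
  "growth_diagram T F f P \<longleftrightarrow> young_diagram F \<and>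
     (\<forall>p\<in>lattice_points F. is_partition (P p)) \<and>
     (\<forall>(x, y)\<in>lattice_points F. x = 0 \<or> y = 0 \<longrightarrow> P (x, y) = empty_partition) \<and>
     (\<forall>(x, y)\<in>F. local_rule T (f (x, y)) (P (x, y)) (P (x, Suc y)) (P (Suc x, y)) (P (Suc x, Suc y)))"

end

theory Submission imports Defs begin

lemma psize_bound:
  assumes "is_partition la" "\<forall>i>N. la i = 0"
  shows "psize la = (\<Sum>i\<in>{1..N}. la i)"
proof -
  have sub: "{i. la i \<noteq> 0} \<subseteq> {1..N}"
  proof
    fix i assume "i \<in> {i. la i \<noteq> 0}"
    then have "la i \<noteq> 0" by simp
    moreover have "la 0 = 0" using assms(1) unfolding is_partition_def by simp
    ultimately have "i \<noteq> 0" "\<not> i > N" using assms(2) by (metis, metis)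
    then show "i \<in> {1..N}" by simp
  qed
  show ?thesis unfolding psize_def
    by (rule sum.mono_neutral_left) (use sub in auto)
qed

lemma partition_bound:
  assumes "is_partition la" obtains N where "\<forall>i>N. la i = 0"
proof -
  have "finite {i. la i \<noteq> 0}" using assms unfolding is_partition_def by auto
  then obtain N where "\<forall>i\<in>{i. la i \<noteq> 0}. i \<le> N" using finite_nat_set_iff_bounded_le by blast
  then show ?thesis using that by (metis (mono_tags) leD mem_Collect_eq)
qed

lemma rsk_sum_aux:
  assumes "rsk_local m ka mu nu rho"
  shows "(\<Sum>i\<in>{1..Suc n}. rho i) + (\<Sum>i\<in>{1..n}. ka i) =
     m + (\<Sum>i\<in>{1..n}. min (mu i) (nu i)) + (\<Sum>i\<in>{1..Suc n}. max (mu i) (nu i))"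
proof (induction n)
  case 0
  then show ?case using assms unfolding rsk_local_def by simp
next
  case (Suc n)
  have "rho (Suc (Suc n)) + ka (Suc n) = min (mu (Suc n)) (nu (Suc n)) + max (mu (Suc (Suc n))) (nu (Suc (Suc n)))"
    using assms unfolding rsk_local_def by (metis diff_Suc_1 le_add1 plus_1_eq_Suc add_2_eq_Suc Suc_le_mono)
  then show ?case using Suc by (simp add: sum.cl_ivl_Suc)
qed

lemma drsk_sum_aux:
  assumes "drsk_local d m ka mu nu rho" "Suc n \<le> d"
  shows "(\<Sum>i\<in>{1..Suc n}. rho i) + ka d + (\<Sum>i\<in>{1..n}. ka i) =
     m + min (mu d) (nu d) + (\<Sum>i\<in>{1..n}. min (mu i) (nu i)) + (\<Sum>i\<in>{1..Suc n}. max (mu i) (nu i))"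
  using assms(2)
proof (induction n)
  case 0
  then show ?case using assms unfolding drsk_local_def by simp
next
  case (Suc n)
  have "rho (Suc (Suc n)) + ka (Suc n) = min (mu (Suc n)) (nu (Suc n)) + max (mu (Suc (Suc n))) (nu (Suc (Suc n)))"
    using assms(1) Suc.prems unfolding drsk_local_def
    by (metis diff_Suc_1 le_add1 plus_1_eq_Suc add_2_eq_Suc Suc_le_mono)
  then show ?case using Suc by (simp add: sum.cl_ivl_Suc)
qed

lemma minmax: "min (a::nat) b + max a b = a + b" by simp

lemma local_psize:
  assumes "local_rule T m ka mu nu rho" "is_partition ka" "is_partition mu" "is_partition nu" "is_partition rho"
  shows "psize rho + psize ka = m + psize mu + psize nu"
proof (cases T)
  case RSK
  then have L: "rsk_local m ka mu nu rho" using assms(1) unfolding local_rule_def by simp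
  obtain N1 where N1: "\<forall>i>N1. ka i = 0" using partition_bound assms(2) by blast
  obtain N2 where N2: "\<forall>i>N2. mu i = 0" using partition_bound assms(3) by blast
  obtain N3 where N3: "\<forall>i>N3. nu i = 0" using partition_bound assms(4) by blast
  obtain N4 where N4: "\<forall>i>N4. rho i = 0" using partition_bound assms(5) by blast
  define N where "N = N1 + N2 + N3 + N4"
  have b1: "\<forall>i>N. ka i = 0" using N1 N_def by auto
  have b2: "\<forall>i>Suc N. mu i = 0" using N2 N_def by auto
  have b2': "\<forall>i>N. mu i = 0" using N2 N_def by auto
  have b3: "\<forall>i>Suc N. nu i = 0" using N3 N_def by auto
  have b3': "\<forall>i>N. nu i = 0" using N3 N_def by auto
  have b4: "\<forall>i>Suc N. rho i = 0" using N4 N_def by auto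
  have e: "(\<Sum>i\<in>{1..Suc N}. rho i) + (\<Sum>i\<in>{1..N}. ka i) =
     m + (\<Sum>i\<in>{1..N}. min (mu i) (nu i)) + (\<Sum>i\<in>{1..Suc N}. max (mu i) (nu i))"
    by (rule rsk_sum_aux[OF L])
  have "(\<Sum>i\<in>{1..Suc N}. max (mu i) (nu i)) = (\<Sum>i\<in>{1..N}. max (mu i) (nu i))"
    using b2' b3' by (simp add: sum.cl_ivl_Suc)
  then have "(\<Sum>i\<in>{1..N}. min (mu i) (nu i)) + (\<Sum>i\<in>{1..Suc N}. max (mu i) (nu i))
      = (\<Sum>i\<in>{1..N}. mu i) + (\<Sum>i\<in>{1..N}. nu i)"
    by (simp add: sum.distrib[symmetric] minmax)
  moreover have "psize rho = (\<Sum>i\<in>{1..Suc N}. rho i)" using psize_bound assms(5) b4 by blast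
  moreover have "psize ka = (\<Sum>i\<in>{1..N}. ka i)" using psize_bound assms(2) b1 by blast
  moreover have "psize mu = (\<Sum>i\<in>{1..N}. mu i)" using psize_bound assms(3) b2' by blast
  moreover have "psize nu = (\<Sum>i\<in>{1..N}. nu i)" using psize_bound assms(4) b3' by blast
  ultimately show ?thesis using e by simp
next
  case (dRSK d)
  then have L: "drsk_local d m ka mu nu rho" using assms(1) unfolding local_rule_def by simp
  have dp: "\<forall>i>d. ka i = 0" "\<forall>i>d. mu i = 0" "\<forall>i>d. nu i = 0" "\<forall>i>d. rho i = 0"
    using L unfolding drsk_local_def is_dpartition_def by auto
  have ps: "psize ka = (\<Sum>i\<in>{1..d}. ka i)" "psize mu = (\<Sum>i\<in>{1..d}. mu i)"
     "psize nu = (\<Sum>i\<in>{1..d}. nu i)" "psize rho = (\<Sum>i\<in>{1..d}. rho i)"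
    using psize_bound assms(2-5) dp by blast+
  show ?thesis
  proof (cases d)
    case 0
    have z: "ka 0 = 0" "mu 0 = 0" "nu 0 = 0" using assms unfolding is_partition_def by auto
    have "rho 1 = 0" "mu 1 = 0" "nu 1 = 0" using dp 0 by auto
    then have "m = 0" using L z 0 unfolding drsk_local_def by simp
    then show ?thesis using ps 0 by simp
  next
    case (Suc n)
    have e: "(\<Sum>i\<in>{1..Suc n}. rho i) + ka d + (\<Sum>i\<in>{1..n}. ka i) =
     m + min (mu d) (nu d) + (\<Sum>i\<in>{1..n}. min (mu i) (nu i)) + (\<Sum>i\<in>{1..Suc n}. max (mu i) (nu i))"
      using drsk_sum_aux[OF L] Suc by simp
    have "ka d + (\<Sum>i\<in>{1..n}. ka i) = (\<Sum>i\<in>{1..d}. ka i)" using Suc by (simp add: sum.cl_ivl_Suc)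
    moreover have "min (mu d) (nu d) + (\<Sum>i\<in>{1..n}. min (mu i) (nu i)) = (\<Sum>i\<in>{1..d}. min (mu i) (nu i))"
      using Suc by (simp add: sum.cl_ivl_Suc)
    moreover have "(\<Sum>i\<in>{1..d}. min (mu i) (nu i)) + (\<Sum>i\<in>{1..d}. max (mu i) (nu i))
       = (\<Sum>i\<in>{1..d}. mu i) + (\<Sum>i\<in>{1..d}. nu i)"
      by (simp add: sum.distrib[symmetric] minmax)
    ultimately show ?thesis using e ps Suc by simp
  qed
qed


lemma lp_iff: "(x, y) \<in> lattice_points F \<longleftrightarrow>
   (\<exists>a b. (a, b) \<in> F \<and> (x = a \<or> x = Suc a) \<and> (y = b \<or> y = Suc b))"
  unfolding lattice_points_def by auto

lemma lp_down:
  assumes "young_diagram F" "(x, y) \<in> lattice_points F" "x' \<le> x" "y' \<le> y"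
  shows "(x', y') \<in> lattice_points F"
proof -
  obtain a b where ab: "(a, b) \<in> F" "x = a \<or> x = Suc a" "y = b \<or> y = Suc b"
    using assms(2) lp_iff by blast
  have "(min x' a, min y' b) \<in> F" using assms(1) ab(1) unfolding young_diagram_def by (meson min.cobounded2)
  moreover have "x' = min x' a \<or> x' = Suc (min x' a)" using ab assms(3) by auto
  moreover have "y' = min y' b \<or> y' = Suc (min y' b)" using ab assms(4) by auto
  ultimately show ?thesis using lp_iff by blast
qed

lemma cell_lp:
  assumes "(x, y) \<in> F"
  shows "(x, y) \<in> lattice_points F" "(Suc x, y) \<in> lattice_points F"
     "(x, Suc y) \<in> lattice_points F" "(Suc x, Suc y) \<in> lattice_points F"
  using assms lp_iff by blast+

lemma local_interlace:
  assumes "local_rule T m ka mu nu rho"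
  shows "interlace ka mu" "interlace ka nu" "interlace mu rho" "interlace nu rho"
  using assms unfolding local_rule_def rsk_local_def drsk_local_def
  by (auto split: growth_type.splits)

lemma interlace_sub:
  assumes "interlace a b" "is_partition a" "is_partition b"
  shows "psubseteq a b"
  using assms unfolding interlace_def is_partition_def psubseteq_def
  by (metis less_one not_le order_refl)

lemma local_rule_swap:
  "local_rule T m ka mu nu rho = local_rule T m ka nu mu rho"
  unfolding local_rule_def rsk_local_def drsk_local_def
  by (auto split: growth_type.splits simp: min.commute max.commute)

lemma gd_axis: "growth_diagram T F f P \<Longrightarrow> (x, y) \<in> lattice_points F \<Longrightarrow> x = 0 \<or> y = 0 \<Longrightarrow> P (x, y) = empty_partition"
  unfolding growth_diagram_def by blast

lemma gd_part: "growth_diagram T F f P \<Longrightarrow> p \<in> lattice_points F \<Longrightarrow> is_partition (P p)"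
  unfolding growth_diagram_def by blast

lemma gd_cell: "growth_diagram T F f P \<Longrightarrow> (x, y) \<in> F \<Longrightarrow> local_rule T (f (x, y)) (P (x, y)) (P (x, Suc y)) (P (Suc x, y)) (P (Suc x, Suc y))"
  unfolding growth_diagram_def by blast

lemma gd_young: "growth_diagram T F f P \<Longrightarrow> young_diagram F"
  unfolding growth_diagram_def by blast

lemma reflect:
  assumes G: "growth_diagram T F f P"
  shows "growth_diagram T ((\<lambda>(x, y). (y, x)) ` F) (\<lambda>(x, y). f (y, x)) (\<lambda>(x, y). P (y, x))"
proof -
  let ?F = "(\<lambda>(x, y). (y, x)) ` F"
  have mem: "(x, y) \<in> ?F \<longleftrightarrow> (y, x) \<in> F" for x y by force
  have lpm: "(x, y) \<in> lattice_points ?F \<longleftrightarrow> (y, x) \<in> lattice_points F" for x y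
    unfolding lp_iff mem by blast
  have Y: "young_diagram F" using gd_young[OF G] .
  have "young_diagram ?F" using Y unfolding young_diagram_def mem
    by (auto simp: mem)
  moreover have "\<forall>p\<in>lattice_points ?F. is_partition ((\<lambda>(x, y). P (y, x)) p)"
    using G unfolding growth_diagram_def by (auto simp: lpm)
  moreover have "\<forall>(x, y)\<in>lattice_points ?F. x = 0 \<or> y = 0 \<longrightarrow> (\<lambda>(x, y). P (y, x)) (x, y) = empty_partition"
    using G unfolding growth_diagram_def by (auto simp: lpm)
  moreover have "\<forall>(x, y)\<in>?F. local_rule T ((\<lambda>(x, y). f (y, x)) (x, y)) ((\<lambda>(x, y). P (y, x)) (x, y))
     ((\<lambda>(x, y). P (y, x)) (x, Suc y)) ((\<lambda>(x, y). P (y, x)) (Suc x, y)) ((\<lambda>(x, y). P (y, x)) (Suc x, Suc y))"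
    using G unfolding growth_diagram_def by (auto simp: mem local_rule_swap)
  ultimately show ?thesis unfolding growth_diagram_def by blast
qed

lemma horiz:
  assumes G: "growth_diagram T F f P"
  shows "horiz_edge F x y \<Longrightarrow>
        int (psize (P (Suc x, y))) - int (psize (P (x, y))) = int (\<Sum>y'<y. f (x, y'))"
proof (induction y)
  case 0
  then have "(x, 0) \<in> F" unfolding horiz_edge_def by simp
  then have "P (x, 0) = empty_partition" "P (Suc x, 0) = empty_partition"
    using gd_axis[OF G] cell_lp by simp_all
  then show ?case by (simp add: psize_def empty_partition_def)
next
  case (Suc y)
  have Y: "young_diagram F" using gd_young[OF G] .
  have c: "(x, y) \<in> F" using Suc.prems Y unfolding horiz_edge_def young_diagram_def
    by (metis diff_Suc_1 le_refl lessI less_imp_le_nat)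
  then have h: "horiz_edge F x y" unfolding horiz_edge_def by simp
  have L: "local_rule T (f (x, y)) (P (x, y)) (P (x, Suc y)) (P (Suc x, y)) (P (Suc x, Suc y))"
    using gd_cell[OF G c] .
  have parts: "is_partition (P (x, y))" "is_partition (P (x, Suc y))" "is_partition (P (Suc x, y))"
     "is_partition (P (Suc x, Suc y))"
    using gd_part[OF G] cell_lp[OF c] by simp_all
  have "psize (P (Suc x, Suc y)) + psize (P (x, y)) = f (x, y) + psize (P (x, Suc y)) + psize (P (Suc x, y))"
    using local_psize[OF L parts] .
  then show ?case using Suc.IH[OF h] by simp
qed

lemma vmono:
  assumes G: "growth_diagram T F f P" and lp: "(x, Suc y) \<in> lattice_points F"
  shows "psubseteq (P (x, y)) (P (x, Suc y))"
proof (cases x)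
  case 0
  have Y: "young_diagram F" using gd_young[OF G] .
  have "(x, y) \<in> lattice_points F" using lp_down[OF Y lp] by simp
  then have "P (x, y) = empty_partition" "P (x, Suc y) = empty_partition"
    using gd_axis[OF G] lp 0 by simp_all
  then show ?thesis by (simp add: psubseteq_def)
next
  case (Suc a)
  have Y: "young_diagram F" using gd_young[OF G] .
  obtain a' b' where ab: "(a', b') \<in> F" "x = a' \<or> x = Suc a'" "Suc y = b' \<or> Suc y = Suc b'"
    using lp lp_iff by blast
  have c: "(a, y) \<in> F" using Y ab Suc unfolding young_diagram_def
    by (metis Suc_leD Suc_le_mono le_refl)
  have L: "local_rule T (f (a, y)) (P (a, y)) (P (a, Suc y)) (P (Suc a, y)) (P (Suc a, Suc y))"
    using gd_cell[OF G c] .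
  have "is_partition (P (Suc a, y))" "is_partition (P (Suc a, Suc y))"
    using gd_part[OF G] cell_lp[OF c] by simp_all
  then show ?thesis using interlace_sub local_interlace(4)[OF L] Suc by simp
qed

lemma reflect_back:
  "(\<lambda>(x, y). (y, x)) ` ((\<lambda>(x, y). (y, x)) ` (F::(nat\<times>nat) set)) = F"
  by (force simp: image_iff)

lemma hmono:
  assumes G: "growth_diagram T F f P" and lp: "(Suc x, y) \<in> lattice_points F"
  shows "psubseteq (P (x, y)) (P (Suc x, y))"
proof -
  have G': "growth_diagram T ((\<lambda>(x, y). (y, x)) ` F) (\<lambda>(x, y). f (y, x)) (\<lambda>(x, y). P (y, x))"
    using reflect[OF G] .
  have "(y, Suc x) \<in> lattice_points ((\<lambda>(x, y). (y, x)) ` F)"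
    using lp unfolding lp_iff by force
  from vmono[OF G' this] show ?thesis by simp
qed

lemma psub_trans: "psubseteq a b \<Longrightarrow> psubseteq b c \<Longrightarrow> psubseteq a c"
  unfolding psubseteq_def by (meson order_trans)

lemma psub_refl: "psubseteq a a" unfolding psubseteq_def by simp

lemma vchain:
  assumes G: "growth_diagram T F f P" and lp: "(x, y + k) \<in> lattice_points F"
  shows "psubseteq (P (x, y)) (P (x, y + k))"
  using lp
proof (induction k)
  case 0 then show ?case by (simp add: psub_refl)
next
  case (Suc k)
  have Y: "young_diagram F" using gd_young[OF G] .
  have "(x, y + k) \<in> lattice_points F" using lp_down[OF Y Suc.prems] by simp
  then show ?case using Suc.IH vmono[OF G] Suc.prems psub_trans by fastforce
qed

lemma hchain:
  assumes G: "growth_diagram T F f P" and lp: "(x + k, y) \<in> lattice_points F"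
  shows "psubseteq (P (x, y)) (P (x + k, y))"
  using lp
proof (induction k)
  case 0 then show ?case by (simp add: psub_refl)
next
  case (Suc k)
  have Y: "young_diagram F" using gd_young[OF G] .
  have "(x + k, y) \<in> lattice_points F" using lp_down[OF Y Suc.prems] by simp
  then show ?case using Suc.IH hmono[OF G] Suc.prems psub_trans by fastforce
qed

theorem proposition3p1:
  fixes T :: growth_type
    and F :: "(nat \<times> nat) set"
    and f :: "nat \<times> nat \<Rightarrow> nat"
    and P :: "nat \<times> nat \<Rightarrow> partition"
  assumes "growth_diagram T F f P"
  shows
    "(\<forall>a b c e. (a, b) \<in> lattice_points F \<and> (c, e) \<in> lattice_points F \<and> a \<le> c \<and> b \<le> e
        \<longrightarrow> psubseteq (P (a, b)) (P (c, e)))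
   \<and> (\<forall>x y. horiz_edge F x y \<longrightarrow>
        int (psize (P (Suc x, y))) - int (psize (P (x, y))) = int (\<Sum>y'<y. f (x, y')))
   \<and> (\<forall>x y. vert_edge F x y \<longrightarrow>
        int (psize (P (x, Suc y))) - int (psize (P (x, y))) = int (\<Sum>x'<x. f (x', y)))
   \<and> growth_diagram T ((\<lambda>(x, y). (y, x)) ` F) (\<lambda>(x, y). f (y, x)) (\<lambda>(x, y). P (y, x))"
proof (intro conjI allI impI)
  fix a b c e
  assume h: "(a, b) \<in> lattice_points F \<and> (c, e) \<in> lattice_points F \<and> a \<le> c \<and> b \<le> e"
  have Y: "young_diagram F" using assms unfolding growth_diagram_def by simp
  obtain k l where kl: "c = a + k" "e = b + l" using h le_Suc_ex by blast
  have "(a, e) \<in> lattice_points F" using lp_down[OF Y, of c e a e] h by simp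
  then have 1: "psubseteq (P (a, b)) (P (a, e))" using vchain[OF assms, of a b l] kl by simp
  have 2: "psubseteq (P (a, e)) (P (c, e))" using hchain[OF assms, of a k e] kl h by simp
  show "psubseteq (P (a, b)) (P (c, e))" using psub_trans[OF 1 2] .
next
  fix x y assume "horiz_edge F x y"
  then show "int (psize (P (Suc x, y))) - int (psize (P (x, y))) = int (\<Sum>y'<y. f (x, y'))"
    using horiz[OF assms] by blast
next
  fix x y assume v: "vert_edge F x y"
  have G': "growth_diagram T ((\<lambda>(x, y). (y, x)) ` F) (\<lambda>(x, y). f (y, x)) (\<lambda>(x, y). P (y, x))"
    using reflect[OF assms] .
  have "horiz_edge ((\<lambda>(x, y). (y, x)) ` F) y x" using v unfolding horiz_edge_def vert_edge_def
    by force
  from horiz[OF G' this]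
  show "int (psize (P (x, Suc y))) - int (psize (P (x, y))) = int (\<Sum>x'<x. f (x', y))" by simp
next
  show "growth_diagram T ((\<lambda>(x, y). (y, x)) ` F) (\<lambda>(x, y). f (y, x)) (\<lambda>(x, y). P (y, x))"
    using reflect[OF assms] .
qed

end
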